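(* Let $\mathcal N$ be an associative algebra over a field of characteristic $\neq 2$, let $H\in\mathcal N$, and for $F\in\mathcal N$ write $\dot F=[F,H]$ and $\ddot F=\dot{(\dot F)}$. Let $X_1,\dots,X_d\in\mathcal N$ and set $g_{ij}=[X_i,\dot X_j]$. Assume $[X_i,g_{jk}]=0$ for all $i,j,k$. Define $\nabla_i(F)=[F,\dot X_i]$ and $$\Gamma_{kij}=\tfrac12\big(\nabla_i g_{jk}+\nabla_j g_{ik}-\nabla_k g_{ij}\big).$$ Then for all $i,j,k$, $$\Gamma_{kij}=\tfrac12\,[X_i,[X_j,\ddot X_k]].$$
   Context: $[A,B]=AB-BA$ denotes the commutator. *)

theory Defs
  imports Main "HOL.Vector_Spaces"
begin

definition comm :: "'a::ring \<Rightarrow> 'a \<Rightarrow> 'a" where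
  "comm A B = A * B - B * A"

definition assoc_algebra :: "('k::field \<Rightarrow> 'a::ring \<Rightarrow> 'a) \<Rightarrow> bool" where
  "assoc_algebra s \<longleftrightarrow> module s \<and>
     (\<forall>c x y. s c (x * y) = s c x * y) \<and> (\<forall>c x y. s c (x * y) = x * s c y)"

definition tdot :: "'a::ring \<Rightarrow> 'a \<Rightarrow> 'a" where
  "tdot H F = comm F H"

definition metric :: "'a::ring \<Rightarrow> (nat \<Rightarrow> 'a) \<Rightarrow> nat \<Rightarrow> nat \<Rightarrow> 'a" where
  "metric H X i j = comm (X i) (tdot H (X j))"

definition nabla :: "'a::ring \<Rightarrow> (nat \<Rightarrow> 'a) \<Rightarrow> nat \<Rightarrow> 'a \<Rightarrow> 'a" where
  "nabla H X i F = comm F (tdot H (X i))"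

definition christoffel :: "('k::field \<Rightarrow> 'a::ring \<Rightarrow> 'a) \<Rightarrow> 'a \<Rightarrow> (nat \<Rightarrow> 'a) \<Rightarrow> nat \<Rightarrow> nat \<Rightarrow> nat \<Rightarrow> 'a" where
  "christoffel s H X k i j =
     s (1/2) (nabla H X i (metric H X j k) + nabla H X j (metric H X i k) - nabla H X k (metric H X i j))"

end

theory Submission
  imports Defs
begin

lemma key:
  fixes A B C H :: "'a::ring"
  shows "comm (comm B (comm C H)) (comm A H) + comm (comm A (comm C H)) (comm B H)
           - comm (comm A (comm B H)) (comm C H)
         = comm A (comm B (comm (comm C H) H)) - comm (comm A (comm B (comm C H))) H"
  by (simp add: comm_def algebra_simps)

theorem lemma3p1:
  fixes s :: "'k::field \<Rightarrow> 'a::ring \<Rightarrow> 'a" and H :: 'a and X :: "nat \<Rightarrow> 'a" and d :: nat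
  assumes alg: "assoc_algebra s"
    and char: "(2::'k) \<noteq> 0"
    and hyp: "\<forall>i\<in>{1..d}. \<forall>j\<in>{1..d}. \<forall>k\<in>{1..d}. comm (X i) (metric H X j k) = 0"
  shows "\<forall>i\<in>{1..d}. \<forall>j\<in>{1..d}. \<forall>k\<in>{1..d}.
           christoffel s H X k i j = s (1/2) (comm (X i) (comm (X j) (tdot H (tdot H (X k)))))"
proof (intro ballI)
  fix i j k assume i: "i \<in> {1..d}" and j: "j \<in> {1..d}" and k: "k \<in> {1..d}"
  have h: "comm (X i) (comm (X j) (comm (X k) H)) = 0"
    using hyp i j k by (auto simp: metric_def tdot_def)
  show "christoffel s H X k i j = s (1/2) (comm (X i) (comm (X j) (tdot H (tdot H (X k)))))"
    unfolding christoffel_def nabla_def metric_def tdot_def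
    using key[of "X j" "X k" H "X i"] h by (simp add: comm_def)
qed

end
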